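(* Let $(W,S)$ be a finitely generated Coxeter system, $u\le v$ in $W$, $I=S(u)$, $J=S(v)$. Define $G_v:\mathcal P_I(J)\to[u,v]$ by $G_v(K)=v_K$ and $F:[u,v]\to\mathcal P_I(J)$ by $F(w)=S(w)$ (these are well defined). Then: (a) $G_v\circ F=\mathrm{id}_{[u,v]}$ and $F(G_v(K))\subseteq K$ for all $K\in\mathcal P_I(J)$. (b) $F:([u,v],\le)\to(\mathcal P_I(J),\subseteq)$ is injective and order preserving, and $F(w\vee g)=F(w)\cup F(g)$ for all $w,g\in[u,v]$. (c) $G_v:(\mathcal P_I(J),\subseteq)\to([u,v],\le)$ is surjective and order preserving, and $G_v(K\cap L)=G_v(K)\wedge G_v(L)$ for all $K,L\in\mathcal P_I(J)$. (d) For every $w\in[u,v]$, the fibre $G_v^{-1}(w)$ is closed under $\cup$ and $\cap$ (a sublattice of $\mathcal P_I(J)$), with $\min G_v^{-1}(w)=S(w)$ and $\max G_v^{-1}(w)=J\setminus\mathrm{Des}(v^{S(w)})$, both belonging to $\mathcal P_I(J)$.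
   Context: $(W,S)$ is a finitely generated Coxeter system with length function $\ell$. For $w\in W$, $S(w)\subseteq S$ is the set of simple reflections appearing in a (any) reduced expression of $w$, and $\mathrm{Des}(w)=\{s\in S:\ell(ws)<\ell(w)\}$. For $I\subseteq S$, $W_I$ is the parabolic subgroup generated by $I$, $X_I=\{u\in W:\ell(us)>\ell(u)\ \forall s\in I\}$, and every $w\in W$ factors uniquely as $w=w^Iw_I$ with $w^I\in X_I$, $w_I\in W_I$ (parabolic components along $I$). The partial order on $W$: $u\le v$ iff $v_{S(u)}=u$; the interval $[u,v]$ is a lattice with join $\vee$ and meet $\wedge$. For $I\subseteq J\subseteq S$, $\mathcal P_I(J)=\{K\subseteq S: I\subseteq K\subseteq J\}$ ordered by inclusion. *)

theory Defs
  imports "HOL-Algebra.Multiplicative_Group" "HOL-Algebra.Generated_Groups"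
begin

definition word_prod :: "('a, 'b) monoid_scheme \<Rightarrow> 'a list \<Rightarrow> 'a" where
  "word_prod G ws = foldr (\<lambda>x y. x \<otimes>\<^bsub>G\<^esub> y) ws \<one>\<^bsub>G\<^esub>"

text \<open>(W,S) is a finitely generated Coxeter system: W = carrier G is generated by the finite
  set S of involutions, and W has the Coxeter presentation
  < S | (s t)^m(s,t) = 1 >, where m(s,t) is the order of s t in W (m(s,s) = 1; the relation is void
  when s t has infinite order, in which case group.ord gives 0).  The presentation is expressed by its
  universal property.  Since the presented group is countable (S is finite), it suffices to test the
  universal property against groups whose elements are natural numbers.\<close>
definition coxeter_system :: "('a, 'b) monoid_scheme \<Rightarrow> 'a set \<Rightarrow> bool" where
  "coxeter_system G S \<longleftrightarrow>
     group G \<and> finite S \<and> S \<subseteq> carrier G \<and> \<one>\<^bsub>G\<^esub> \<notin> S \<and>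
     (\<forall>s\<in>S. s \<otimes>\<^bsub>G\<^esub> s = \<one>\<^bsub>G\<^esub>) \<and>
     generate G S = carrier G \<and>
     (\<forall>(H :: nat monoid) f. group H \<longrightarrow> f \<in> S \<rightarrow> carrier H \<longrightarrow>
        (\<forall>s\<in>S. \<forall>t\<in>S. (f s \<otimes>\<^bsub>H\<^esub> f t) [^]\<^bsub>H\<^esub> group.ord G (s \<otimes>\<^bsub>G\<^esub> t) = \<one>\<^bsub>H\<^esub>) \<longrightarrow>
        (\<exists>h \<in> hom G H. \<forall>s\<in>S. h s = f s))"

definition cox_len :: "('a, 'b) monoid_scheme \<Rightarrow> 'a set \<Rightarrow> 'a \<Rightarrow> nat" where
  "cox_len G S w = (LEAST n. \<exists>ws. set ws \<subseteq> S \<and> length ws = n \<and> word_prod G ws = w)"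

definition reduced_word :: "('a, 'b) monoid_scheme \<Rightarrow> 'a set \<Rightarrow> 'a list \<Rightarrow> bool" where
  "reduced_word G S ws \<longleftrightarrow> set ws \<subseteq> S \<and> length ws = cox_len G S (word_prod G ws)"

definition supp :: "('a, 'b) monoid_scheme \<Rightarrow> 'a set \<Rightarrow> 'a \<Rightarrow> 'a set" where
  "supp G S w = {s. \<exists>ws. reduced_word G S ws \<and> word_prod G ws = w \<and> s \<in> set ws}"

definition Des :: "('a, 'b) monoid_scheme \<Rightarrow> 'a set \<Rightarrow> 'a \<Rightarrow> 'a set" where
  "Des G S w = {s\<in>S. cox_len G S (w \<otimes>\<^bsub>G\<^esub> s) < cox_len G S w}"

definition min_reps :: "('a, 'b) monoid_scheme \<Rightarrow> 'a set \<Rightarrow> 'a set \<Rightarrow> 'a set" where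
  "min_reps G S I = {x \<in> carrier G. \<forall>s\<in>I. cox_len G S (x \<otimes>\<^bsub>G\<^esub> s) > cox_len G S x}"

text \<open>Parabolic components w = w^I w_I with w^I in X_I and w_I in W_I = generate G I.\<close>
definition par_comp :: "('a, 'b) monoid_scheme \<Rightarrow> 'a set \<Rightarrow> 'a set \<Rightarrow> 'a \<Rightarrow> 'a" where
  "par_comp G S I w = (THE y. y \<in> generate G I \<and>
      w \<otimes>\<^bsub>G\<^esub> inv\<^bsub>G\<^esub> y \<in> min_reps G S I)"

definition min_comp :: "('a, 'b) monoid_scheme \<Rightarrow> 'a set \<Rightarrow> 'a set \<Rightarrow> 'a \<Rightarrow> 'a" where
  "min_comp G S I w = w \<otimes>\<^bsub>G\<^esub> inv\<^bsub>G\<^esub> (par_comp G S I w)"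

definition cox_le :: "('a, 'b) monoid_scheme \<Rightarrow> 'a set \<Rightarrow> 'a \<Rightarrow> 'a \<Rightarrow> bool" where
  "cox_le G S u v \<longleftrightarrow> u \<in> carrier G \<and> v \<in> carrier G \<and> par_comp G S (supp G S u) v = u"

definition cox_interval :: "('a, 'b) monoid_scheme \<Rightarrow> 'a set \<Rightarrow> 'a \<Rightarrow> 'a \<Rightarrow> 'a set" where
  "cox_interval G S u v = {w. cox_le G S u w \<and> cox_le G S w v}"

definition int_join :: "('a, 'b) monoid_scheme \<Rightarrow> 'a set \<Rightarrow> 'a \<Rightarrow> 'a \<Rightarrow> 'a \<Rightarrow> 'a \<Rightarrow> 'a" where
  "int_join G S u v x y = (THE z. z \<in> cox_interval G S u v \<and> cox_le G S x z \<and> cox_le G S y z \<and>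
     (\<forall>z'\<in>cox_interval G S u v. cox_le G S x z' \<and> cox_le G S y z' \<longrightarrow> cox_le G S z z'))"

definition int_meet :: "('a, 'b) monoid_scheme \<Rightarrow> 'a set \<Rightarrow> 'a \<Rightarrow> 'a \<Rightarrow> 'a \<Rightarrow> 'a \<Rightarrow> 'a" where
  "int_meet G S u v x y = (THE z. z \<in> cox_interval G S u v \<and> cox_le G S z x \<and> cox_le G S z y \<and>
     (\<forall>z'\<in>cox_interval G S u v. cox_le G S z' x \<and> cox_le G S z' y \<longrightarrow> cox_le G S z' z))"

end

theory Submission
  imports Defs "HOL-Library.Countable_Set"
begin


locale coxsys =
  fixes G :: "('a, 'b) monoid_scheme" (structure) and S :: "'a set"
  assumes cs: "coxeter_system G S"
begin

abbreviation wp where "wp \<equiv> word_prod G"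
abbreviation len where "len \<equiv> cox_len G S"

lemma grp: "group G" using cs by (simp add: coxeter_system_def)
lemma finS: "finite S" using cs by (simp add: coxeter_system_def)
lemma S_carr: "S \<subseteq> carrier G" using cs by (simp add: coxeter_system_def)
lemma one_notin: "\<one> \<notin> S" using cs by (simp add: coxeter_system_def)
lemma sq: "s \<in> S \<Longrightarrow> s \<otimes> s = \<one>" using cs by (simp add: coxeter_system_def)
lemma gen: "generate G S = carrier G" using cs by (simp add: coxeter_system_def)
lemma univ: "group (H :: nat monoid) \<Longrightarrow> f \<in> S \<rightarrow> carrier H \<Longrightarrow>
        (\<forall>s\<in>S. \<forall>t\<in>S. (f s \<otimes>\<^bsub>H\<^esub> f t) [^]\<^bsub>H\<^esub> group.ord G (s \<otimes> t) = \<one>\<^bsub>H\<^esub>) \<Longrightarrow>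
        (\<exists>h \<in> hom G H. \<forall>s\<in>S. h s = f s)"
  using cs unfolding coxeter_system_def by blast

end

sublocale coxsys \<subseteq> group G by (rule grp)

context coxsys
begin

lemma Sc: "s \<in> S \<Longrightarrow> s \<in> carrier G" using S_carr by blast

lemma lcanc1[simp]: "x \<in> carrier G \<Longrightarrow> y \<in> carrier G \<Longrightarrow> inv x \<otimes> (x \<otimes> y) = y"
  by (simp flip: m_assoc)
lemma lcanc2[simp]: "x \<in> carrier G \<Longrightarrow> y \<in> carrier G \<Longrightarrow> x \<otimes> (inv x \<otimes> y) = y"
  by (simp flip: m_assoc)
lemma sq2[simp]: "s \<in> S \<Longrightarrow> y \<in> carrier G \<Longrightarrow> s \<otimes> (s \<otimes> y) = y"
  using sq Sc by (simp flip: m_assoc)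

lemma inv_S: "s \<in> S \<Longrightarrow> inv s = s"
  using sq Sc inv_char by blast

lemma wp_Nil[simp]: "wp [] = \<one>" by (simp add: word_prod_def)
lemma wp_Cons[simp]: "wp (a # ws) = a \<otimes> wp ws" by (simp add: word_prod_def)

lemma wp_carr[simp]: "set ws \<subseteq> carrier G \<Longrightarrow> wp ws \<in> carrier G"
  by (induction ws) auto

lemma wp_append: "set xs \<subseteq> carrier G \<Longrightarrow> set ys \<subseteq> carrier G \<Longrightarrow> wp (xs @ ys) = wp xs \<otimes> wp ys"
  by (induction xs) (auto simp: m_assoc)

lemma wpS[simp]: "set ws \<subseteq> S \<Longrightarrow> wp ws \<in> carrier G"
  using S_carr by auto

lemma wp_appS: "set xs \<subseteq> S \<Longrightarrow> set ys \<subseteq> S \<Longrightarrow> wp (xs @ ys) = wp xs \<otimes> wp ys"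
  using S_carr by (intro wp_append) auto

lemma wp_snoc: "set xs \<subseteq> S \<Longrightarrow> s \<in> S \<Longrightarrow> wp (xs @ [s]) = wp xs \<otimes> s"
  using wp_appS[of xs "[s]"] Sc by simp

lemma wp_rev: "set ws \<subseteq> S \<Longrightarrow> wp (rev ws) = inv (wp ws)"
proof (induction ws)
  case (Cons a ws)
  then have a: "a \<in> S" and ws: "set ws \<subseteq> S" by auto
  have "wp (rev (a # ws)) = wp (rev ws) \<otimes> a" using wp_snoc[of "rev ws" a] a ws by simp
  also have "\<dots> = inv (wp ws) \<otimes> inv a" using Cons a ws inv_S by simp
  also have "\<dots> = inv (a \<otimes> wp ws)" using a ws Sc by (simp add: inv_mult_group)
  finally show ?case by simp
qed simp

lemma gen_words: "K \<subseteq> S \<Longrightarrow> generate G K = {wp ws | ws. set ws \<subseteq> K}"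
proof
  assume K: "K \<subseteq> S"
  show "generate G K \<subseteq> {wp ws | ws. set ws \<subseteq> K}"
  proof
    fix x assume "x \<in> generate G K"
    then show "x \<in> {wp ws | ws. set ws \<subseteq> K}"
    proof induction
      case one then show ?case by (intro CollectI exI[of _ "[]"]) simp
    next
      case (incl h) then show ?case using K Sc by (intro CollectI exI[of _ "[h]"]) auto
    next
      case (inv h) then show ?case using K Sc inv_S by (intro CollectI exI[of _ "[h]"]) auto
    next
      case (eng h1 h2)
      then obtain xs ys where "set xs \<subseteq> K" "set ys \<subseteq> K" "h1 = wp xs" "h2 = wp ys" by blast
      then show ?case using K by (intro CollectI exI[of _ "xs @ ys"]) (auto simp: wp_appS)
    qed
  qed
next
  assume K: "K \<subseteq> S"
  show "{wp ws | ws. set ws \<subseteq> K} \<subseteq> generate G K"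
  proof clarify
    fix ws assume "set ws \<subseteq> K"
    then show "wp ws \<in> generate G K"
      by (induction ws) (auto intro: generate.intros)
  qed
qed

lemma wordsE: assumes "w \<in> carrier G" obtains ws where "set ws \<subseteq> S" "wp ws = w"
  using gen_words[of S] gen assms by auto

end


context coxsys
begin

lemma len_ex: assumes "w \<in> carrier G"
  shows "\<exists>ws. set ws \<subseteq> S \<and> length ws = len w \<and> wp ws = w"
proof -
  obtain ws where "set ws \<subseteq> S" "wp ws = w" using wordsE assms by blast
  then have "\<exists>n ws. set ws \<subseteq> S \<and> length ws = n \<and> wp ws = w" by blast
  then show ?thesis unfolding cox_len_def by (rule LeastI_ex)
qed

lemma redE: assumes "w \<in> carrier G"
  obtains ws where "set ws \<subseteq> S" "length ws = len w" "wp ws = w"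
  using len_ex[OF assms] by blast

lemma len_le: "set ws \<subseteq> S \<Longrightarrow> len (wp ws) \<le> length ws"
  unfolding cox_len_def by (rule Least_le) blast

lemma len_one[simp]: "len \<one> = 0"
  using len_le[of "[]"] by simp

lemma len_0: "w \<in> carrier G \<Longrightarrow> len w = 0 \<Longrightarrow> w = \<one>"
  by (metis length_0_conv redE wp_Nil)

lemma len_S: "s \<in> S \<Longrightarrow> len s = 1"
proof -
  assume s: "s \<in> S"
  have "len s \<le> 1" using len_le[of "[s]"] s Sc by simp
  moreover have "len s \<noteq> 0" using len_0[of s] s Sc one_notin by auto
  ultimately show ?thesis by simp
qed

lemma len_mult_S: assumes "w \<in> carrier G" "s \<in> S"
  shows "len (w \<otimes> s) \<le> len w + 1"
proof -
  obtain ws where ws: "set ws \<subseteq> S" "length ws = len w" "wp ws = w" using redE assms(1) by blast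
  have "wp (ws @ [s]) = w \<otimes> s" using ws assms wp_snoc by simp
  then show ?thesis using len_le[of "ws @ [s]"] ws assms by simp
qed

lemma len_mult_S2: assumes "w \<in> carrier G" "s \<in> S"
  shows "len w \<le> len (w \<otimes> s) + 1"
proof -
  have "w = (w \<otimes> s) \<otimes> s" using assms Sc sq by (simp add: m_assoc)
  then show ?thesis using len_mult_S[of "w \<otimes> s" s] assms Sc by simp
qed

lemma len_inv: assumes "w \<in> carrier G" shows "len (inv w) \<le> len w"
proof -
  obtain ws where ws: "set ws \<subseteq> S" "length ws = len w" "wp ws = w" using redE assms(1) by blast
  then show ?thesis using len_le[of "rev ws"] wp_rev[of ws] by simp
qed

lemma len_inv_eq[simp]: "w \<in> carrier G \<Longrightarrow> len (inv w) = len w"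
  using len_inv[of w] len_inv[of "inv w"] by simp

fun rl :: "'a list \<Rightarrow> 'a list" where
  "rl [] = []"
| "rl (a # ws) = (inv (wp ws) \<otimes> a \<otimes> wp ws) # rl ws"

lemma rl_carr: "set ws \<subseteq> S \<Longrightarrow> set (rl ws) \<subseteq> carrier G"
  by (induction ws) (auto simp: Sc)

lemma len_rl[simp]: "length (rl ws) = length ws" by (induction ws) auto

definition conj :: "'a \<Rightarrow> 'a \<Rightarrow> 'a" where "conj c y = inv c \<otimes> y \<otimes> c"

lemma rl_append: "set xs \<subseteq> S \<Longrightarrow> set ys \<subseteq> S \<Longrightarrow>
   rl (xs @ ys) = map (conj (wp ys)) (rl xs) @ rl ys"
proof (induction xs)
  case (Cons a xs)
  then have a: "a \<in> carrier G" using Sc by auto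
  have X: "wp xs \<in> carrier G" "wp ys \<in> carrier G" using Cons by auto
  have "inv (wp (xs @ ys)) \<otimes> a \<otimes> wp (xs @ ys) = conj (wp ys) (inv (wp xs) \<otimes> a \<otimes> wp xs)"
    using Cons X a by (simp add: wp_appS conj_def inv_mult_group m_assoc)
  then show ?case using Cons by simp
qed simp

lemma count_conj: "set l \<subseteq> carrier G \<Longrightarrow> c \<in> carrier G \<Longrightarrow> x \<in> carrier G \<Longrightarrow>
   count_list (map (conj c) l) x = count_list l (c \<otimes> x \<otimes> inv c)"
proof (induction l)
  case (Cons a l)
  have "(conj c a = x) = (a = c \<otimes> x \<otimes> inv c)"
  proof
    assume "conj c a = x"
    then show "a = c \<otimes> x \<otimes> inv c" using Cons by (auto simp: conj_def m_assoc)
  next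
    assume "a = c \<otimes> x \<otimes> inv c"
    then show "conj c a = x" using Cons by (simp add: conj_def m_assoc)
  qed
  then show ?case using Cons by auto
qed simp

lemma rl_del: "set ws \<subseteq> S \<Longrightarrow> t \<in> set (rl ws) \<Longrightarrow>
   \<exists>j < length ws. wp ws \<otimes> t = wp (take j ws @ drop (Suc j) ws)"
proof (induction ws)
  case (Cons a ws)
  have a: "a \<in> carrier G" and W: "wp ws \<in> carrier G" using Cons Sc by auto
  show ?case
  proof (cases "t = inv (wp ws) \<otimes> a \<otimes> wp ws")
    case True
    have "wp (a # ws) \<otimes> t = wp ws" using True a W sq Cons.prems
      by (simp add: m_assoc[symmetric]) (simp add: m_assoc)
    then show ?thesis by (intro exI[of _ 0]) simp
  next
    case False
    then have "t \<in> set (rl ws)" using Cons by simp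
    then obtain j where j: "j < length ws" "wp ws \<otimes> t = wp (take j ws @ drop (Suc j) ws)"
      using Cons by auto
    have "t \<in> carrier G" using rl_carr Cons \<open>t \<in> set (rl ws)\<close> by auto
    then have "wp (a # ws) \<otimes> t = a \<otimes> wp (take j ws @ drop (Suc j) ws)" using j a W by (simp add: m_assoc)
    then show ?thesis using j by (intro exI[of _ "Suc j"]) simp
  qed
qed simp

end


context coxsys
begin

definition RR :: "('a \<times> bool) set" where "RR = carrier G \<times> (UNIV :: bool set)"

definition Phi :: "'a list \<Rightarrow> ('a \<times> bool) \<Rightarrow> ('a \<times> bool)" where
  "Phi ws = (\<lambda>p \<in> RR. (wp ws \<otimes> fst p \<otimes> inv (wp ws), snd p \<noteq> odd (count_list (rl ws) (fst p))))"

lemma Phi_in: "set ws \<subseteq> S \<Longrightarrow> p \<in> RR \<Longrightarrow> Phi ws p \<in> RR"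
  by (auto simp: Phi_def RR_def)

lemma Phi_app: assumes "set xs \<subseteq> S" "set ys \<subseteq> S"
  shows "Phi (xs @ ys) = compose RR (Phi xs) (Phi ys)"
proof
  fix p show "Phi (xs @ ys) p = compose RR (Phi xs) (Phi ys) p"
  proof (cases "p \<in> RR")
    case False then show ?thesis by (simp add: Phi_def compose_def)
  next
    case True
    then obtain x b where p: "p = (x, b)" "x \<in> carrier G" by (auto simp: RR_def)
    have X: "wp xs \<in> carrier G" "wp ys \<in> carrier G" using assms by auto
    have in2: "Phi ys p \<in> RR" using Phi_in assms True by blast
    have c: "count_list (rl (xs @ ys)) x = count_list (rl xs) (wp ys \<otimes> x \<otimes> inv (wp ys)) + count_list (rl ys) x"
      using rl_append[OF assms] count_conj[of "rl xs" "wp ys" x] rl_carr[of xs] assms p X by simp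
    show ?thesis using True in2 p X assms c
      by (auto simp: Phi_def compose_def wp_appS inv_mult_group m_assoc RR_def)
  qed
qed

lemma Phi_Nil: "Phi [] = (\<lambda>p \<in> RR. p)"
  by (auto simp: Phi_def RR_def)

lemma Phi_aa: "a \<in> S \<Longrightarrow> Phi [a, a] = Phi []"
proof -
  assume a: "a \<in> S"
  have "inv (a \<otimes> \<one>) \<otimes> a \<otimes> (a \<otimes> \<one>) = a" using a Sc inv_S by (simp add: m_assoc)
  then show ?thesis using a Sc sq inv_S by (auto simp: Phi_def RR_def)
qed

lemma Phi_rev: "set ws \<subseteq> S \<Longrightarrow> Phi (rev ws @ ws) = Phi []"
proof (induction ws)
  case (Cons a ws)
  then have a: "a \<in> S" and ws: "set ws \<subseteq> S" by auto
  have "Phi (rev (a # ws) @ (a # ws)) = Phi (rev ws @ ([a, a] @ ws))" by simp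
  also have "\<dots> = compose RR (Phi (rev ws)) (compose RR (Phi [a, a]) (Phi ws))"
    using a ws by (simp add: Phi_app del: append.simps)
  also have "\<dots> = compose RR (Phi (rev ws)) (compose RR (Phi []) (Phi ws))" using Phi_aa a by simp
  also have "\<dots> = compose RR (Phi (rev ws)) (Phi ws)" using Phi_app[of "[]" ws] ws by simp
  also have "\<dots> = Phi (rev ws @ ws)" using Phi_app[of "rev ws" ws] ws by simp
  also have "\<dots> = Phi []" using Cons ws by simp
  finally show ?case .
qed simp

lemma compose_Phi_Nil: "set ws \<subseteq> S \<Longrightarrow> compose RR (Phi []) (Phi ws) = Phi ws"
  using Phi_app[of "[]" ws] by simp

definition rep :: "'a \<Rightarrow> 'a \<Rightarrow> nat \<Rightarrow> 'a list" where
  "rep s t k = concat (replicate k [s, t])"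

lemma rep_Suc: "rep s t (Suc k) = rep s t k @ [s, t]"
  by (simp add: rep_def replicate_append_same[symmetric])

lemma rep_set: "s \<in> S \<Longrightarrow> t \<in> S \<Longrightarrow> set (rep s t k) \<subseteq> S"
  by (induction k) (auto simp: rep_Suc, simp add: rep_def)

lemma wp_rep: "s \<in> S \<Longrightarrow> t \<in> S \<Longrightarrow> wp (rep s t k) = (s \<otimes> t) [^] k"
proof (induction k)
  case 0 then show ?case by (simp add: rep_def)
next
  case (Suc k)
  then show ?case using rep_set[OF Suc.prems, of k] Sc
    by (simp add: rep_Suc wp_appS m_assoc)
qed

lemma sum_shift2: "(\<Sum>j<Suc (Suc n). f j) = f 0 + f 1 + (\<Sum>j<n. f (Suc (Suc j))) " for f :: "nat \<Rightarrow> nat"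
  by (simp add: sum.lessThan_Suc_shift del: sum.lessThan_Suc)

lemma cnt_rep: assumes s: "s \<in> S" and t: "t \<in> S"
  shows "x \<in> carrier G \<Longrightarrow> count_list (rl (rep s t k)) x =
     (\<Sum>j< 2 * k. if x = t \<otimes> (s \<otimes> t) [^] j then 1 else 0)"
proof (induction k arbitrary: x)
  case 0 then show ?case by (simp add: rep_def)
next
  case (Suc k)
  define c where "c = s \<otimes> t"
  have sc: "s \<in> carrier G" and tc: "t \<in> carrier G" using s t Sc by auto
  have cc: "c \<in> carrier G" using sc tc c_def by simp
  have rs: "set (rep s t k) \<subseteq> S" using rep_set s t by blast
  have rl2: "rl [s, t] = [t \<otimes> s \<otimes> t, t]" using s t sc tc inv_S by simp
  have "rl (rep s t (Suc k)) = map (conj c) (rl (rep s t k)) @ [t \<otimes> s \<otimes> t, t]"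
    using rl_append[OF rs, of "[s,t]"] s t rl2 sc tc by (simp add: rep_Suc c_def)
  then have "count_list (rl (rep s t (Suc k))) x =
     count_list (rl (rep s t k)) (c \<otimes> x \<otimes> inv c) + (if t \<otimes> s \<otimes> t = x then 1 else 0) + (if t = x then 1 else 0)"
    using count_conj[of "rl (rep s t k)" c x] rl_carr[OF rs] cc Suc.prems by simp
  also have "count_list (rl (rep s t k)) (c \<otimes> x \<otimes> inv c) =
     (\<Sum>j< 2 * k. if c \<otimes> x \<otimes> inv c = t \<otimes> c [^] j then 1 else 0)"
    using Suc.IH[of "c \<otimes> x \<otimes> inv c"] Suc.prems cc c_def by simp
  also have "\<dots> = (\<Sum>j< 2 * k. if x = t \<otimes> c [^] (Suc (Suc j)) then 1 else 0)"
  proof (rule sum.cong[OF refl])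
    fix j :: nat
    have cj: "c [^] j \<in> carrier G" using cc by simp
    have e1: "c [^] (Suc (Suc j)) = c \<otimes> c [^] j \<otimes> c"
      by (simp only: nat_pow_Suc[of c "Suc j"] nat_pow_Suc2[OF cc, of j]) 
    have ci: "inv c = t \<otimes> s" using c_def sc tc inv_S s t by (simp add: inv_mult_group)
    have "(c \<otimes> x \<otimes> inv c = t \<otimes> c [^] j) = (x = inv c \<otimes> (t \<otimes> c [^] j) \<otimes> c)"
    proof
      assume "c \<otimes> x \<otimes> inv c = t \<otimes> c [^] j"
      then have "inv c \<otimes> (c \<otimes> x \<otimes> inv c) \<otimes> c = inv c \<otimes> (t \<otimes> c [^] j) \<otimes> c" by simp
      then show "x = inv c \<otimes> (t \<otimes> c [^] j) \<otimes> c" using cc Suc.prems by (simp add: m_assoc)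
    next
      assume "x = inv c \<otimes> (t \<otimes> c [^] j) \<otimes> c"
      then show "c \<otimes> x \<otimes> inv c = t \<otimes> c [^] j" using cc tc cj by (simp add: m_assoc)
    qed
    also have "inv c \<otimes> (t \<otimes> c [^] j) \<otimes> c = t \<otimes> c [^] (Suc (Suc j))"
      using ci e1 sc tc cj cc c_def by (simp add: m_assoc)
    finally show "(if c \<otimes> x \<otimes> inv c = t \<otimes> c [^] j then 1 else 0) =
         (if x = t \<otimes> c [^] (Suc (Suc j)) then 1 else (0::nat))" by simp
  qed
  finally have A: "count_list (rl (rep s t (Suc k))) x =
    (\<Sum>j< 2 * k. if x = t \<otimes> c [^] (Suc (Suc j)) then 1 else 0) + (if t \<otimes> s \<otimes> t = x then 1 else 0) + (if t = x then 1 else 0)" .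
  have t1: "t \<otimes> c [^] (1::nat) = t \<otimes> s \<otimes> t" using c_def cc sc tc by (simp add: m_assoc)
  have t0: "t \<otimes> c [^] (0::nat) = t" using tc by simp
  have "(\<Sum>j< 2 * Suc k. if x = t \<otimes> c [^] j then 1 else 0) =
     (if x = t \<otimes> c [^] (0::nat) then 1 else 0) + (if x = t \<otimes> c [^] (1::nat) then 1 else 0) +
     (\<Sum>j< 2 * k. if x = t \<otimes> c [^] (Suc (Suc j)) then 1 else (0::nat))"
    using sum_shift2[of "\<lambda>j. if x = t \<otimes> c [^] j then 1 else 0" "2 * k"] by simp
  then show ?case using A t0 t1 c_def by auto
qed

lemma sum_split_nat: "(\<Sum>j< m + n. f j) = (\<Sum>j<m. f j) + (\<Sum>j<n. f (m + j))" for f :: "nat \<Rightarrow> nat"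
  by (induction n) auto

lemma Phi_rep: assumes s: "s \<in> S" and t: "t \<in> S"
  shows "Phi (rep s t (ord (s \<otimes> t))) = Phi []"
proof -
  define c where "c = s \<otimes> t"
  define m where "m = ord c"
  have cc: "c \<in> carrier G" using s t Sc c_def by simp
  have cm: "c [^] m = \<one>" using cc m_def by simp
  have W: "wp (rep s t m) = \<one>" using wp_rep[OF s t] cm c_def by simp
  have E: "even (count_list (rl (rep s t m)) x)" if x: "x \<in> carrier G" for x
  proof -
    define f where "f = (\<lambda>j::nat. if x = t \<otimes> c [^] j then 1 else (0::nat))"
    have fm: "f (m + j) = f j" for j
      using cm cc by (simp add: f_def nat_pow_mult[symmetric])
    have "count_list (rl (rep s t m)) x = (\<Sum>j< m + m. f j)"
      using cnt_rep[OF s t x, of m] c_def f_def by (simp add: mult_2)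
    also have "\<dots> = 2 * (\<Sum>j< m. f j)" using sum_split_nat[where m=m and n=m and f=f] fm by simp
    finally show ?thesis by simp
  qed
  have "Phi (rep s t m) = Phi []" unfolding Phi_def
    using W E by (auto simp: RR_def intro!: restrict_ext)
  then show ?thesis using m_def c_def by simp
qed

end


context coxsys
begin

definition CC where "CC = Phi ` {ws. set ws \<subseteq> S}"

lemma CC_countable: "countable CC"
proof -
  have "{ws. set ws \<subseteq> S} = lists S" by auto
  then have "countable {ws. set ws \<subseteq> S}" using finS countable_finite countable_lists by metis
  then show ?thesis unfolding CC_def by simp
qed

definition code where "code = to_nat_on CC"
definition dec where "dec = from_nat_into CC"

definition HH :: "nat monoid" where
  "HH = \<lparr>carrier = code ` CC, mult = (\<lambda>a b. code (compose RR (dec a) (dec b))), one = code (Phi [])\<rparr>"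

lemma dec_code[simp]: "set ws \<subseteq> S \<Longrightarrow> dec (code (Phi ws)) = Phi ws"
  unfolding dec_def code_def using CC_countable by (simp add: CC_def)

lemma code_mult: "set xs \<subseteq> S \<Longrightarrow> set ys \<subseteq> S \<Longrightarrow>
   code (Phi xs) \<otimes>\<^bsub>HH\<^esub> code (Phi ys) = code (Phi (xs @ ys))"
  by (simp add: HH_def Phi_app)

lemma carrHH: "carrier HH = {code (Phi ws) | ws. set ws \<subseteq> S}"
  by (auto simp: HH_def CC_def)

lemma HH_group: "group HH"
proof (rule groupI)
  fix x y assume "x \<in> carrier HH" "y \<in> carrier HH"
  then obtain xs ys where "set xs \<subseteq> S" "set ys \<subseteq> S" "x = code (Phi xs)" "y = code (Phi ys)"
    by (auto simp: carrHH)
  then show "x \<otimes>\<^bsub>HH\<^esub> y \<in> carrier HH" by (auto simp: code_mult carrHH intro!: exI[of _ "xs @ ys"])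
next
  show "\<one>\<^bsub>HH\<^esub> \<in> carrier HH" by (auto simp: HH_def CC_def)
next
  fix x y z assume "x \<in> carrier HH" "y \<in> carrier HH" "z \<in> carrier HH"
  then obtain xs ys zs where "set xs \<subseteq> S" "set ys \<subseteq> S" "set zs \<subseteq> S"
     "x = code (Phi xs)" "y = code (Phi ys)" "z = code (Phi zs)"
    by (auto simp: carrHH)
  then show "x \<otimes>\<^bsub>HH\<^esub> y \<otimes>\<^bsub>HH\<^esub> z = x \<otimes>\<^bsub>HH\<^esub> (y \<otimes>\<^bsub>HH\<^esub> z)"
    by (simp add: code_mult)
next
  fix x assume "x \<in> carrier HH"
  then obtain xs where xs: "set xs \<subseteq> S" "x = code (Phi xs)" by (auto simp: carrHH)
  have "\<one>\<^bsub>HH\<^esub> = code (Phi [])" by (simp add: HH_def)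
  then show "\<one>\<^bsub>HH\<^esub> \<otimes>\<^bsub>HH\<^esub> x = x" using xs code_mult[of "[]" xs] by simp
next
  fix x assume "x \<in> carrier HH"
  then obtain xs where xs: "set xs \<subseteq> S" "x = code (Phi xs)" by (auto simp: carrHH)
  have "code (Phi (rev xs)) \<otimes>\<^bsub>HH\<^esub> x = \<one>\<^bsub>HH\<^esub>"
    using xs code_mult[of "rev xs" xs] Phi_rev[of xs] by (simp add: HH_def)
  moreover have "code (Phi (rev xs)) \<in> carrier HH" using xs by (auto simp: carrHH intro!: exI[of _ "rev xs"])
  ultimately show "\<exists>y\<in>carrier HH. y \<otimes>\<^bsub>HH\<^esub> x = \<one>\<^bsub>HH\<^esub>" by blast
qed

lemma code_pow: "s \<in> S \<Longrightarrow> t \<in> S \<Longrightarrow> code (Phi [s, t]) [^]\<^bsub>HH\<^esub> (k::nat) = code (Phi (rep s t k))"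
proof (induction k)
  case 0 then show ?case by (simp add: HH_def rep_def)
next
  case (Suc k)
  then show ?case using code_mult[of "rep s t k" "[s,t]"] rep_set[of s t k] by (simp add: rep_Suc)
qed

lemma hom_ex: "\<exists>h \<in> hom G HH. \<forall>s\<in>S. h s = code (Phi [s])"
proof (rule univ[OF HH_group])
  show "(\<lambda>s. code (Phi [s])) \<in> S \<rightarrow> carrier HH" by (auto simp: carrHH)
  show "\<forall>s\<in>S. \<forall>t\<in>S. (code (Phi [s]) \<otimes>\<^bsub>HH\<^esub> code (Phi [t])) [^]\<^bsub>HH\<^esub> ord (s \<otimes> t) = \<one>\<^bsub>HH\<^esub>"
  proof (intro ballI)
    fix s t assume st: "s \<in> S" "t \<in> S"
    then have "code (Phi [s]) \<otimes>\<^bsub>HH\<^esub> code (Phi [t]) = code (Phi [s, t])"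
      using code_mult[of "[s]" "[t]"] by simp
    then show "(code (Phi [s]) \<otimes>\<^bsub>HH\<^esub> code (Phi [t])) [^]\<^bsub>HH\<^esub> ord (s \<otimes> t) = \<one>\<^bsub>HH\<^esub>"
      using code_pow[OF st] Phi_rep[OF st] by (simp add: HH_def)
  qed
qed

lemma Phi_wd: assumes "set xs \<subseteq> S" "set ys \<subseteq> S" "wp xs = wp ys"
  shows "Phi xs = Phi ys"
proof -
  obtain h where h: "h \<in> hom G HH" "\<forall>s\<in>S. h s = code (Phi [s])" using hom_ex by blast
  interpret gh: group_hom G HH h using h HH_group grp by (simp add: group_hom_def group_hom_axioms_def)
  have hw: "set ws \<subseteq> S \<Longrightarrow> h (wp ws) = code (Phi ws)" for ws
  proof (induction ws)
    case Nil then show ?case by (simp add: HH_def)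
  next
    case (Cons a ws)
    then have "h (wp (a # ws)) = h a \<otimes>\<^bsub>HH\<^esub> h (wp ws)" using Sc by simp
    also have "\<dots> = code (Phi [a]) \<otimes>\<^bsub>HH\<^esub> code (Phi ws)" using Cons h by simp
    also have "\<dots> = code (Phi (a # ws))" using code_mult[of "[a]" ws] Cons by simp
    finally show ?case .
  qed
  have "code (Phi xs) = code (Phi ys)" using hw assms by metis
  then have "dec (code (Phi xs)) = dec (code (Phi ys))" by simp
  then show ?thesis using assms by simp
qed

lemma par_wd: assumes "set xs \<subseteq> S" "set ys \<subseteq> S" "wp xs = wp ys" "x \<in> carrier G"
  shows "odd (count_list (rl xs) x) = odd (count_list (rl ys) x)"
proof -
  have "Phi xs (x, False) = Phi ys (x, False)" using Phi_wd[OF assms(1-3)] by simp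
  then show ?thesis using assms(4) by (simp add: Phi_def RR_def)
qed

end


context coxsys
begin

definition del :: "nat \<Rightarrow> 'a list \<Rightarrow> 'a list" where "del j ws = take j ws @ drop (Suc j) ws"

lemma del_set: "set (del j ws) \<subseteq> set ws"
  unfolding del_def using set_drop_subset set_take_subset by (metis Un_least set_append)

lemma del_len: "j < length ws \<Longrightarrow> length (del j ws) = length ws - 1"
  unfolding del_def by simp

lemma rl_snoc: "set ws \<subseteq> S \<Longrightarrow> s \<in> S \<Longrightarrow> rl (ws @ [s]) = map (conj s) (rl ws) @ [s]"
  using rl_append[of ws "[s]"] Sc by simp

lemma cnt_snoc: assumes "set ws \<subseteq> S" "s \<in> S"
  shows "count_list (rl (ws @ [s])) s = count_list (rl ws) s + 1"
proof -
  have "count_list (map (conj s) (rl ws)) s = count_list (rl ws) (s \<otimes> s \<otimes> inv s)"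
    using count_conj[of "rl ws" s s] rl_carr assms Sc by simp
  also have "s \<otimes> s \<otimes> inv s = s" using assms Sc sq inv_S by simp
  finally show ?thesis using rl_snoc assms by simp
qed

lemma odd_desc: assumes "set ws \<subseteq> S" "s \<in> S" "odd (count_list (rl ws) s)"
  shows "\<exists>j < length ws. wp ws \<otimes> s = wp (del j ws)"
proof -
  have "s \<in> set (rl ws)" using assms(3) by (metis count_notin odd_pos less_irrefl)
  then show ?thesis using rl_del[OF assms(1)] unfolding del_def by blast
qed

lemma desc_odd: assumes w: "w \<in> carrier G" and s: "s \<in> S" and ws: "set ws \<subseteq> S" "wp ws = w"
  shows "len (w \<otimes> s) < len w \<longleftrightarrow> odd (count_list (rl ws) s)"
proof -
  have A: "len (v \<otimes> s) < len v" if v: "v \<in> carrier G" and vs: "set vs \<subseteq> S" "wp vs = v"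
     and o: "odd (count_list (rl vs) s)" for v vs
  proof -
    obtain r where r: "set r \<subseteq> S" "length r = len v" "wp r = v" using redE v by blast
    have "odd (count_list (rl r) s)" using par_wd[of vs r s] vs r o s Sc by simp
    then obtain j where j: "j < length r" "v \<otimes> s = wp (del j r)" using odd_desc[OF r(1) s] r by blast
    have "len (v \<otimes> s) \<le> length (del j r)" using j len_le[of "del j r"] del_set[of j r] r by auto
    then show ?thesis using j del_len r by simp
  qed
  show ?thesis
  proof
    assume l: "len (w \<otimes> s) < len w"
    show "odd (count_list (rl ws) s)"
    proof (rule ccontr)
      assume e: "\<not> odd (count_list (rl ws) s)"
      have "odd (count_list (rl (ws @ [s])) s)" using cnt_snoc[OF ws(1) s] e by simp
      moreover have "wp (ws @ [s]) = w \<otimes> s" using wp_snoc ws s by simp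
      ultimately have "len (w \<otimes> s \<otimes> s) < len (w \<otimes> s)"
        using A[of "w \<otimes> s" "ws @ [s]"] w s Sc ws by simp
      then show False using l w s Sc sq by (simp add: m_assoc)
    qed
  next
    assume "odd (count_list (rl ws) s)"
    then show "len (w \<otimes> s) < len w" using A[OF w ws] by simp
  qed
qed

lemma len_neq: assumes "w \<in> carrier G" "s \<in> S" shows "len (w \<otimes> s) \<noteq> len w"
proof
  assume eq: "len (w \<otimes> s) = len w"
  obtain ws where ws: "set ws \<subseteq> S" "wp ws = w" using wordsE assms by blast
  have "\<not> odd (count_list (rl ws) s)" using desc_odd[OF assms ws] eq by simp
  then have "odd (count_list (rl (ws @ [s])) s)" using cnt_snoc ws assms by simp
  moreover have "wp (ws @ [s]) = w \<otimes> s" using wp_snoc ws assms by simp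
  ultimately have "len (w \<otimes> s \<otimes> s) < len (w \<otimes> s)"
    using desc_odd[of "w \<otimes> s" s "ws @ [s]"] assms Sc ws by simp
  then show False using eq assms Sc sq by (simp add: m_assoc)
qed

lemma len_up_down: assumes "w \<in> carrier G" "s \<in> S"
  shows "len (w \<otimes> s) = len w + 1 \<or> len (w \<otimes> s) + 1 = len w"
  using len_neq[OF assms] len_mult_S[OF assms] len_mult_S2[OF assms] by linarith

lemma exchange: assumes ws: "set ws \<subseteq> S" and s: "s \<in> S" and l: "len (wp ws \<otimes> s) < len (wp ws)"
  shows "\<exists>j < length ws. wp ws \<otimes> s = wp (del j ws)"
  using desc_odd[of "wp ws" s ws] assms odd_desc by simp

end


context coxsys
begin

lemma gen_carr: "K \<subseteq> S \<Longrightarrow> x \<in> generate G K \<Longrightarrow> x \<in> carrier G"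
  by (rule generate_in_carrier[OF subset_trans[OF _ S_carr]])

lemma gen_sub: "K \<subseteq> S \<Longrightarrow> subgroup (generate G K) G"
  by (rule generate_is_subgroup[OF subset_trans[OF _ S_carr]])

lemma gen_mult: "K \<subseteq> S \<Longrightarrow> x \<in> generate G K \<Longrightarrow> y \<in> generate G K \<Longrightarrow> x \<otimes> y \<in> generate G K"
  by (rule subgroup.m_closed[OF gen_sub])

lemma gen_inv: "K \<subseteq> S \<Longrightarrow> x \<in> generate G K \<Longrightarrow> inv x \<in> generate G K"
  by (rule subgroup.m_inv_closed[OF gen_sub])

lemma gen_mono: "K \<subseteq> L \<Longrightarrow> generate G K \<subseteq> generate G L"
  by (rule mono_generate)

lemma redK: assumes K: "K \<subseteq> S"
  shows "set ws \<subseteq> K \<Longrightarrow> \<exists>vs. set vs \<subseteq> K \<and> wp vs = wp ws \<and> length vs = len (wp ws)"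
proof (induction ws rule: rev_induct)
  case Nil then show ?case by (intro exI[of _ "[]"]) simp
next
  case (snoc a ws)
  then have a: "a \<in> K" "a \<in> S" and ws: "set ws \<subseteq> K" "set ws \<subseteq> S" using K by auto
  obtain vs where vs: "set vs \<subseteq> K" "wp vs = wp ws" "length vs = len (wp ws)" using snoc ws by blast
  have vsS: "set vs \<subseteq> S" using vs K by auto
  have e: "wp (ws @ [a]) = wp ws \<otimes> a" using wp_snoc ws a by simp
  show ?case
  proof (cases "len (wp ws \<otimes> a) = len (wp ws) + 1")
    case True
    have w2: "wp (vs @ [a]) = wp ws \<otimes> a" using wp_snoc[OF vsS a(2)] vs by simp
    have "set (vs @ [a]) \<subseteq> K" using vs a by simp
    then show ?thesis using w2 vs e True by (intro exI[of _ "vs @ [a]"]) simp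
  next
    case False
    then have "len (wp vs \<otimes> a) < len (wp vs)" using len_up_down[of "wp ws" a] ws a vs by auto
    then obtain j where j: "j < length vs" "wp vs \<otimes> a = wp (del j vs)" using exchange[OF vsS a(2)] by blast
    have l2: "len (wp ws \<otimes> a) + 1 = len (wp ws)" using False len_up_down[of "wp ws" a] ws a by simp
    have "set (del j vs) \<subseteq> K" using del_set[of j vs] vs by blast
    moreover have "length (del j vs) = len (wp ws \<otimes> a)" using del_len[of j vs] j vs l2 by simp
    ultimately show ?thesis using j vs e by (intro exI[of _ "del j vs"]) simp
  qed
qed

lemma redK': assumes K: "K \<subseteq> S" and x: "x \<in> generate G K"
  obtains vs where "set vs \<subseteq> K" "wp vs = x" "length vs = len x"
proof -
  have "x \<in> {wp ws | ws. set ws \<subseteq> K}" using gen_words[OF K] x by simp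
  then obtain ws where ws: "set ws \<subseteq> K" "wp ws = x" by blast
  then obtain vs where "set vs \<subseteq> K" "wp vs = wp ws" "length vs = len (wp ws)" using redK[OF K] by blast
  then show ?thesis using that ws by simp
qed

end


context coxsys
begin

lemma S_in_gen: assumes K: "K \<subseteq> S" and s: "s \<in> S" and sg: "s \<in> generate G K"
  shows "s \<in> K"
proof -
  obtain vs where vs: "set vs \<subseteq> K" "wp vs = s" "length vs = len s" using redK'[OF K sg] by blast
  then have "length vs = 1" using len_S s by simp
  then obtain k where "vs = [k]" by (metis One_nat_def length_0_conv length_Suc_conv)
  then show ?thesis using vs K Sc by auto
qed

lemma red_in_K: assumes K: "K \<subseteq> S"
  shows "set ws \<subseteq> S \<Longrightarrow> length ws = len (wp ws) \<Longrightarrow> wp ws \<in> generate G K \<Longrightarrow> set ws \<subseteq> K"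
proof (induction ws rule: rev_induct)
  case Nil then show ?case by simp
next
  case (snoc a ws)
  define x where "x = wp (ws @ [a])"
  have a: "a \<in> S" and ws: "set ws \<subseteq> S" using snoc by auto
  have xe: "x = wp ws \<otimes> a" using wp_snoc ws a x_def by simp
  have xc: "x \<in> carrier G" using xe ws a Sc by simp
  have xa: "x \<otimes> a = wp ws" using xe ws a Sc sq by (simp add: m_assoc)
  have lx: "len x = length ws + 1" using snoc x_def by simp
  have l1: "len (wp ws) \<le> length ws" using len_le ws by blast
  have lt: "len (x \<otimes> a) < len x" using xa l1 lx by simp
  have xg: "x \<in> generate G K" using snoc x_def by simp
  obtain vs where vs: "set vs \<subseteq> K" "wp vs = x" "length vs = len x"
    using redK'[OF K xg] by blast
  have vsS: "set vs \<subseteq> S" using vs K by auto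
  obtain j where j: "wp vs \<otimes> a = wp (del j vs)" using exchange[OF vsS a] lt vs by auto
  have "set (del j vs) \<subseteq> K" using del_set[of j vs] vs by blast
  then have d: "wp (del j vs) \<in> generate G K"
    using gen_words[OF K] by auto
  have "a = inv x \<otimes> (x \<otimes> a)" using xc a Sc by simp
  then have ag: "a \<in> generate G K" using gen_mult[OF K gen_inv[OF K xg]] d j vs by simp
  have aK: "a \<in> K" using S_in_gen[OF K a ag] .
  have wg: "wp ws \<in> generate G K" using xa gen_mult[OF K xg] ag by metis
  have "len x \<le> len (wp ws) + 1" using len_mult_S[of "wp ws" a] xe ws a by simp
  then have "length ws = len (wp ws)" using lx l1 by simp
  then have "set ws \<subseteq> K" using snoc.IH ws wg by blast
  then show ?case using aK by simp
qed

lemma supp_S: "supp G S w \<subseteq> S"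
  by (auto simp: supp_def reduced_word_def)

lemma in_gen_supp: assumes "w \<in> carrier G" shows "w \<in> generate G (supp G S w)"
proof -
  obtain ws where ws: "set ws \<subseteq> S" "length ws = len w" "wp ws = w" using redE assms by blast
  then have "set ws \<subseteq> supp G S w" by (auto simp: supp_def reduced_word_def)
  then have "wp ws \<in> generate G (supp G S w)" using gen_words[OF supp_S] by auto
  then show ?thesis using ws by simp
qed

lemma supp_le: assumes K: "K \<subseteq> S" and w: "w \<in> generate G K" shows "supp G S w \<subseteq> K"
  using red_in_K[OF K] w by (auto simp: supp_def reduced_word_def)

lemma gen_iff_supp: "K \<subseteq> S \<Longrightarrow> w \<in> carrier G \<Longrightarrow> w \<in> generate G K \<longleftrightarrow> supp G S w \<subseteq> K"
proof
  assume "K \<subseteq> S" "w \<in> carrier G" "w \<in> generate G K"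
  then show "supp G S w \<subseteq> K" using supp_le by blast
next
  assume "K \<subseteq> S" "w \<in> carrier G" "supp G S w \<subseteq> K"
  then show "w \<in> generate G K" using in_gen_supp gen_mono by blast
qed

end


context coxsys
begin

lemma del_append1: "j < length xs \<Longrightarrow> del j (xs @ ys) = del j xs @ ys"
  by (simp add: del_def)

lemma del_append2: "length xs \<le> j \<Longrightarrow> del j (xs @ ys) = xs @ del (j - length xs) ys"
  by (simp add: del_def Suc_diff_le)

definition cos where "cos K w = {w \<otimes> z | z. z \<in> generate G K}"

definition ismin where "ismin K w u \<longleftrightarrow> u \<in> cos K w \<and> (\<forall>v\<in>cos K w. len u \<le> len v)"

lemma ismin_ex: "w \<in> carrier G \<Longrightarrow> \<exists>u. ismin K w u"
proof -
  have "w \<otimes> \<one> \<in> cos K w" unfolding cos_def using generate.one by blast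
  then obtain u where "u \<in> cos K w" "\<forall>v. v \<in> cos K w \<longrightarrow> len u \<le> len v"
    using ex_has_least_nat[of "\<lambda>v. v \<in> cos K w" "w \<otimes> \<one>" len] by blast
  then show ?thesis unfolding ismin_def by blast
qed

lemma self_cos: "w \<in> carrier G \<Longrightarrow> w \<in> cos K w"
proof -
  assume w: "w \<in> carrier G"
  have "w = w \<otimes> \<one>" using w by simp
  then show ?thesis unfolding cos_def using generate.one by blast
qed

lemma cos_carr: "K \<subseteq> S \<Longrightarrow> w \<in> carrier G \<Longrightarrow> v \<in> cos K w \<Longrightarrow> v \<in> carrier G"
  unfolding cos_def using gen_carr by auto

lemma cos_mult: assumes K: "K \<subseteq> S" and w: "w \<in> carrier G" and v: "v \<in> cos K w" and y: "y \<in> generate G K"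
  shows "v \<otimes> y \<in> cos K w"
proof -
  obtain z where z: "z \<in> generate G K" "v = w \<otimes> z" using v unfolding cos_def by blast
  have "v \<otimes> y = w \<otimes> (z \<otimes> y)" using z w y gen_carr[OF K] by (simp add: m_assoc)
  moreover have "z \<otimes> y \<in> generate G K" using gen_mult[OF K] z y by blast
  ultimately show ?thesis unfolding cos_def by blast
qed

lemma cos_diff: assumes K: "K \<subseteq> S" and w: "w \<in> carrier G" and v: "v \<in> cos K w" and v': "v' \<in> cos K w"
  shows "inv v \<otimes> v' \<in> generate G K"
proof -
  obtain z where z: "z \<in> generate G K" "v = w \<otimes> z" using v unfolding cos_def by blast
  obtain z' where z': "z' \<in> generate G K" "v' = w \<otimes> z'" using v' unfolding cos_def by blast
  have zc: "z \<in> carrier G" "z' \<in> carrier G" using z z' gen_carr[OF K] by auto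
  have "inv v \<otimes> v' = inv z \<otimes> z'" using z z' zc w by (simp add: inv_mult_group m_assoc)
  then show ?thesis using gen_mult[OF K gen_inv[OF K z(1)] z'(1)] by simp
qed

lemma ismin_add: assumes K: "K \<subseteq> S" and w: "w \<in> carrier G" and m: "ismin K w u"
  shows "set vs \<subseteq> K \<Longrightarrow> length vs = len (wp vs) \<Longrightarrow> len (u \<otimes> wp vs) = len u + length vs"
proof (induction vs rule: rev_induct)
  case Nil
  have "u \<in> carrier G" using m cos_carr[OF K w] unfolding ismin_def by blast
  then show ?case by simp
next
  case (snoc a vs)
  have uc: "u \<in> carrier G" and uC: "u \<in> cos K w" using m cos_carr[OF K w] unfolding ismin_def by blast+
  have a: "a \<in> K" "a \<in> S" and vs: "set vs \<subseteq> K" "set vs \<subseteq> S" using snoc K by auto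
  define z where "z = wp vs"
  have zc: "z \<in> carrier G" using vs z_def by simp
  have wz: "wp (vs @ [a]) = z \<otimes> a" using wp_snoc vs a z_def by simp
  have l1: "len z \<le> length vs" using len_le vs z_def by blast
  have l2: "len (z \<otimes> a) \<le> len z + 1" using len_mult_S zc a by blast
  have lv: "length vs = len z" using snoc.prems wz l1 l2 by simp
  have IH: "len (u \<otimes> z) = len u + length vs" using snoc.IH vs lv z_def by simp
  have uzc: "u \<otimes> z \<in> carrier G" using uc zc by simp
  show ?case
  proof (cases "len (u \<otimes> z \<otimes> a) = len (u \<otimes> z) + 1")
    case True then show ?thesis using IH wz uc zc a Sc by (simp add: m_assoc)
  next
    case False
    then have lt: "len (u \<otimes> z \<otimes> a) < len (u \<otimes> z)" using len_up_down[OF uzc a(2)] by simp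
    obtain us where us: "set us \<subseteq> S" "length us = len u" "wp us = u" using redE uc by blast
    have e: "wp (us @ vs) = u \<otimes> z" using wp_appS us vs z_def by simp
    obtain j where j: "j < length (us @ vs)" "u \<otimes> z \<otimes> a = wp (del j (us @ vs))"
      using exchange[of "us @ vs" a] us vs a lt e by auto
    show ?thesis
    proof (cases "j < length us")
      case True
      define u' where "u' = wp (del j us)"
      have dS: "set (del j us) \<subseteq> S" using del_set us by blast
      have u'c: "u' \<in> carrier G" using dS u'_def by simp
      have "u \<otimes> z \<otimes> a = u' \<otimes> z" using j True del_append1 wp_appS dS vs u'_def z_def by simp
      then have "u' = u \<otimes> z \<otimes> a \<otimes> inv z" using u'c zc by (simp add: m_assoc)
      also have "\<dots> = u \<otimes> (z \<otimes> a \<otimes> inv z)" using uc zc a Sc by (simp add: m_assoc)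
      finally have u'e: "u' = u \<otimes> (z \<otimes> a \<otimes> inv z)" .
      have zg: "z \<in> generate G K" using gen_words[OF K] vs z_def by auto
      have ag: "a \<in> generate G K" using a generate.incl by metis
      have "z \<otimes> a \<otimes> inv z \<in> generate G K"
        using gen_mult[OF K gen_mult[OF K zg ag] gen_inv[OF K zg]] .
      then have "u' \<in> cos K w" using cos_mult[OF K w uC] u'e by simp
      then have "len u \<le> len u'" using m unfolding ismin_def by blast
      moreover have "len u' \<le> length us - 1" using len_le[OF dS] del_len True u'_def by simp
      ultimately show ?thesis using True us by simp
    next
      case False
      define k where "k = j - length us"
      have dS: "set (del k vs) \<subseteq> S" using del_set vs by blast
      have kl: "k < length vs" using j False k_def by simp
      have "u \<otimes> z \<otimes> a = u \<otimes> wp (del k vs)" using j False del_append2 wp_appS dS us k_def by simp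
      then have "z \<otimes> a = wp (del k vs)" using uc zc a Sc dS by (simp add: m_assoc)
      then have "len (z \<otimes> a) \<le> length vs - 1" using len_le[OF dS] del_len kl by simp
      then show ?thesis using snoc.prems wz kl by simp
    qed
  qed
qed

lemma ismin_add': assumes K: "K \<subseteq> S" and w: "w \<in> carrier G" and m: "ismin K w u" and y: "y \<in> generate G K"
  shows "len (u \<otimes> y) = len u + len y"
proof -
  obtain vs where vs: "set vs \<subseteq> K" "wp vs = y" "length vs = len y" using redK'[OF K y] by blast
  have "len (u \<otimes> wp vs) = len u + length vs" using ismin_add[OF K w m vs(1)] vs by simp
  then show ?thesis using vs by simp
qed

definition minr where "minr K = min_reps G S K"

lemma ismin_minr: assumes K: "K \<subseteq> S" and w: "w \<in> carrier G" and m: "ismin K w u"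
  shows "u \<in> min_reps G S K"
proof -
  have uc: "u \<in> carrier G" and uC: "u \<in> cos K w" using m cos_carr[OF K w] unfolding ismin_def by blast+
  have "len u < len (u \<otimes> s)" if s: "s \<in> K" for s
  proof -
    have "s \<in> generate G K" using s generate.incl by metis
    then have "u \<otimes> s \<in> cos K w" using cos_mult[OF K w uC] by blast
    then have "len u \<le> len (u \<otimes> s)" using m unfolding ismin_def by blast
    moreover have "len (u \<otimes> s) \<noteq> len u" using len_neq uc s K by blast
    ultimately show ?thesis by simp
  qed
  then show ?thesis using uc unfolding min_reps_def by blast
qed

lemma ismin_unique: assumes K: "K \<subseteq> S" and w: "w \<in> carrier G" and m: "ismin K w u"
  and x: "x \<in> min_reps G S K" and xC: "x \<in> cos K w"
  shows "x = u"
proof -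
  have uc: "u \<in> carrier G" and uC: "u \<in> cos K w" using m cos_carr[OF K w] unfolding ismin_def by blast+
  have xc: "x \<in> carrier G" using x unfolding min_reps_def by blast
  define z where "z = inv u \<otimes> x"
  have zg: "z \<in> generate G K" using cos_diff[OF K w uC xC] z_def by simp
  have zc: "z \<in> carrier G" using zg gen_carr[OF K] by blast
  have xz: "x = u \<otimes> z" using z_def uc xc by simp
  show ?thesis
  proof (cases "z = \<one>")
    case True then show ?thesis using xz uc by simp
  next
    case False
    obtain vs where vs: "set vs \<subseteq> K" "wp vs = z" "length vs = len z" using redK'[OF K zg] by blast
    have "vs \<noteq> []" using vs False by auto
    then obtain vs' a where va: "vs = vs' @ [a]" by (metis rev_exhaust)
    have a: "a \<in> K" "a \<in> S" and vs': "set vs' \<subseteq> K" "set vs' \<subseteq> S" using vs va K by auto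
    have "z = wp vs' \<otimes> a" using vs va wp_snoc vs' a by simp
    then have za: "z \<otimes> a = wp vs'" using vs' a Sc sq by (simp add: m_assoc)
    have "len (z \<otimes> a) < len z" using za len_le[OF vs'(2)] vs va by simp
    moreover have zag: "z \<otimes> a \<in> generate G K" using za gen_words[OF K] vs' by auto
    have "len (x \<otimes> a) = len u + len (z \<otimes> a)" using ismin_add'[OF K w m zag] xz uc zc a Sc by (simp add: m_assoc)
    moreover have "len x = len u + len z" using ismin_add'[OF K w m zg] xz by simp
    moreover have "len x < len (x \<otimes> a)" using x a unfolding min_reps_def by blast
    ultimately show ?thesis by simp
  qed
qed

lemma minr_carr: "x \<in> min_reps G S K \<Longrightarrow> x \<in> carrier G" unfolding min_reps_def by blast

lemma minr_add: assumes K: "K \<subseteq> S" and x: "x \<in> min_reps G S K" and y: "y \<in> generate G K"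
  shows "len (x \<otimes> y) = len x + len y"
proof -
  have xc: "x \<in> carrier G" using minr_carr x by blast
  obtain u where m: "ismin K x u" using ismin_ex xc by blast
  have "x \<in> cos K x" using self_cos xc by blast
  then have "x = u" using ismin_unique[OF K xc m x] by blast
  then show ?thesis using ismin_add'[OF K xc m y] by simp
qed

lemma minr_unique: assumes K: "K \<subseteq> S" and x: "x \<in> min_reps G S K" and x': "x' \<in> min_reps G S K"
  and y: "y \<in> generate G K" and y': "y' \<in> generate G K" and e: "x \<otimes> y = x' \<otimes> y'"
  shows "x = x'"
proof -
  have xc: "x \<in> carrier G" "x' \<in> carrier G" using minr_carr x x' by blast+
  have yc: "y \<in> carrier G" "y' \<in> carrier G" using gen_carr[OF K] y y' by blast+
  obtain u where m: "ismin K x u" using ismin_ex xc by blast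
  have "x \<in> cos K x" using self_cos xc by blast
  then have "x = u" using ismin_unique[OF K xc(1) m x] by blast
  have "x' = x \<otimes> (y \<otimes> inv y')"
  proof -
    have "x' = x' \<otimes> y' \<otimes> inv y'" using xc yc by (simp add: m_assoc)
    also have "\<dots> = x \<otimes> y \<otimes> inv y'" using e by simp
    also have "\<dots> = x \<otimes> (y \<otimes> inv y')" using xc yc by (simp add: m_assoc)
    finally show ?thesis .
  qed
  moreover have "y \<otimes> inv y' \<in> generate G K" using gen_mult[OF K y gen_inv[OF K y']] .
  ultimately have "x' \<in> cos K x" unfolding cos_def by blast
  then have "x' = u" using ismin_unique[OF K xc(1) m x'] by blast
  then show ?thesis using \<open>x = u\<close> by simp
qed

lemma pc_char: assumes K: "K \<subseteq> S" and x: "x \<in> min_reps G S K" and y: "y \<in> generate G K"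
  shows "par_comp G S K (x \<otimes> y) = y"
  unfolding par_comp_def
proof (rule the_equality)
  have xc: "x \<in> carrier G" using minr_carr x by blast
  have yc: "y \<in> carrier G" using gen_carr[OF K] y by blast
  show "y \<in> generate G K \<and> x \<otimes> y \<otimes> inv y \<in> min_reps G S K" using y x xc yc by (simp add: m_assoc)
  fix y' assume a: "y' \<in> generate G K \<and> x \<otimes> y \<otimes> inv y' \<in> min_reps G S K"
  have y'c: "y' \<in> carrier G" using gen_carr[OF K] a by blast
  have "x \<otimes> y = (x \<otimes> y \<otimes> inv y') \<otimes> y'" using xc yc y'c by (simp add: m_assoc)
  then have "x = x \<otimes> y \<otimes> inv y'" using minr_unique[OF K x conjunct2[OF a] y conjunct1[OF a]] by simp
  then have "inv x \<otimes> x = inv x \<otimes> (x \<otimes> y \<otimes> inv y')" by simp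
  then have "\<one> = y \<otimes> inv y'" using xc yc y'c by (simp add: m_assoc)
  then have "\<one> \<otimes> y' = y \<otimes> inv y' \<otimes> y'" by simp
  then show "y' = y" using xc yc y'c by (simp add: m_assoc)
qed

lemma pc_ex: assumes K: "K \<subseteq> S" and w: "w \<in> carrier G"
  shows "\<exists>x y. x \<in> min_reps G S K \<and> y \<in> generate G K \<and> w = x \<otimes> y"
proof -
  obtain u where m: "ismin K w u" using ismin_ex w by blast
  have uC: "u \<in> cos K w" and uc: "u \<in> carrier G" using m cos_carr[OF K w] unfolding ismin_def by blast+
  have "w \<in> cos K w" using self_cos w by blast
  then have "inv u \<otimes> w \<in> generate G K" using cos_diff[OF K w uC] by blast
  moreover have "w = u \<otimes> (inv u \<otimes> w)" using uc w by simp
  ultimately show ?thesis using ismin_minr[OF K w m] by blast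
qed

lemma pc_props: assumes K: "K \<subseteq> S" and w: "w \<in> carrier G"
  shows "par_comp G S K w \<in> generate G K" "min_comp G S K w \<in> min_reps G S K"
    "w = min_comp G S K w \<otimes> par_comp G S K w"
proof -
  obtain x y where xy: "x \<in> min_reps G S K" "y \<in> generate G K" "w = x \<otimes> y" using pc_ex[OF K w] by blast
  have xc: "x \<in> carrier G" using minr_carr xy by blast
  have yc: "y \<in> carrier G" using gen_carr[OF K] xy by blast
  have p: "par_comp G S K w = y" using pc_char[OF K xy(1,2)] xy by simp
  have m: "min_comp G S K w = x" unfolding min_comp_def p using xy xc yc by (simp add: m_assoc)
  show "par_comp G S K w \<in> generate G K" "min_comp G S K w \<in> min_reps G S K"
    "w = min_comp G S K w \<otimes> par_comp G S K w" using p m xy by auto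
qed

end


context coxsys
begin

abbreviation pc where "pc K w \<equiv> par_comp G S K w"
abbreviation mc where "mc K w \<equiv> min_comp G S K w"
abbreviation sg where "sg w \<equiv> supp G S w"

lemma one_minr: "K \<subseteq> S \<Longrightarrow> \<one> \<in> min_reps G S K"
  unfolding min_reps_def using len_S Sc by auto

lemma pc_id: assumes K: "K \<subseteq> S" and w: "w \<in> generate G K" shows "pc K w = w"
  using pc_char[OF K one_minr[OF K] w] gen_carr[OF K w] by simp

lemma pc_carr: "K \<subseteq> S \<Longrightarrow> w \<in> carrier G \<Longrightarrow> pc K w \<in> carrier G"
  using pc_props(1) gen_carr by blast

lemma pc_pc: assumes K: "K \<subseteq> S" and L: "L \<subseteq> S" and w: "w \<in> carrier G"
  shows "pc L (pc K w) = pc (K \<inter> L) w"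
proof -
  define x y where "x = mc K w" and "y = pc K w"
  have x: "x \<in> min_reps G S K" and y: "y \<in> generate G K" and wxy: "w = x \<otimes> y"
    using pc_props[OF K w] x_def y_def by auto
  have xc: "x \<in> carrier G" using minr_carr x by blast
  have yc: "y \<in> carrier G" using gen_carr[OF K y] .
  define a b where "a = mc L y" and "b = pc L y"
  have a: "a \<in> min_reps G S L" and b: "b \<in> generate G L" and yab: "y = a \<otimes> b"
    using pc_props[OF L yc] a_def b_def by auto
  have ac: "a \<in> carrier G" using minr_carr a by blast
  have bc: "b \<in> carrier G" using gen_carr[OF L b] .
  have ly: "len y = len a + len b" using minr_add[OF L a b] yab by simp
  obtain as where as: "set as \<subseteq> S" "length as = len a" "wp as = a" using redE ac by blast
  obtain bs where bs: "set bs \<subseteq> S" "length bs = len b" "wp bs = b" using redE bc by blast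
  have "set (as @ bs) \<subseteq> K"
    using red_in_K[OF K, of "as @ bs"] as bs ly yab y wp_appS[of as bs] by simp
  then have asK: "set as \<subseteq> K" and bsK: "set bs \<subseteq> K" by auto
  have bsL: "set bs \<subseteq> L" using red_in_K[OF L bs(1)] bs b by simp
  have KL: "K \<inter> L \<subseteq> S" using K by blast
  have bKL: "b \<in> generate G (K \<inter> L)" using gen_words[OF KL] bsK bsL bs by blast
  have aK: "a \<in> generate G K" using gen_words[OF K] asK as by blast
  have xa: "x \<otimes> a \<in> min_reps G S (K \<inter> L)"
    unfolding min_reps_def
  proof (intro CollectI conjI ballI)
    show "x \<otimes> a \<in> carrier G" using xc ac by simp
    fix s assume s: "s \<in> K \<inter> L"
    have sg: "s \<in> generate G K" using s generate.incl by (metis IntD1)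
    have sS: "s \<in> S" using s K by blast
    have "len (x \<otimes> a \<otimes> s) = len x + len (a \<otimes> s)"
      using minr_add[OF K x gen_mult[OF K aK sg]] xc ac Sc[OF sS] by (simp add: m_assoc)
    moreover have "len a < len (a \<otimes> s)" using a s unfolding min_reps_def by blast
    moreover have "len (x \<otimes> a) = len x + len a" using minr_add[OF K x aK] .
    ultimately show "len (x \<otimes> a) < len (x \<otimes> a \<otimes> s)" by simp
  qed
  have "w = (x \<otimes> a) \<otimes> b" using wxy yab xc ac bc by (simp add: m_assoc)
  then have "pc (K \<inter> L) w = b" using pc_char[OF KL xa bKL] by simp
  then show ?thesis using b_def y_def by simp
qed

lemma minr_iff: assumes K: "K \<subseteq> S" and x: "x \<in> carrier G"
  shows "x \<in> min_reps G S K \<longleftrightarrow> K \<inter> Des G S x = {}"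
proof -
  have "(len x < len (x \<otimes> s)) = (\<not> len (x \<otimes> s) < len x)" if "s \<in> K" for s
    using len_neq[OF x, of s] that K by auto
  then show ?thesis unfolding min_reps_def Des_def using x K by auto
qed

lemma pc_self: "w \<in> carrier G \<Longrightarrow> pc (sg w) w = w"
  using pc_id[OF supp_S in_gen_supp] by blast

lemma le_supp: assumes "cox_le G S a b" shows "sg a \<subseteq> sg b"
proof -
  have ac: "a \<in> carrier G" and bc: "b \<in> carrier G" and e: "pc (sg a) b = a"
    using assms unfolding cox_le_def by auto
  have "a = pc (sg a) (pc (sg b) b)" using e pc_self[OF bc] by simp
  also have "\<dots> = pc (sg b \<inter> sg a) b" using pc_pc[OF supp_S supp_S bc] by simp
  finally have "a \<in> generate G (sg b \<inter> sg a)" using pc_props(1)[of "sg b \<inter> sg a" b] supp_S bc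
    by (metis inf.coboundedI1)
  then have "sg a \<subseteq> sg b \<inter> sg a" using supp_le[of "sg b \<inter> sg a" a] supp_S by blast
  then show ?thesis by blast
qed

lemma le_antisym: assumes "cox_le G S a b" "cox_le G S b a" shows "a = b"
proof -
  have "sg a = sg b" using le_supp assms by blast
  then show ?thesis using assms pc_self unfolding cox_le_def by metis
qed

lemma pc_le: assumes K: "K \<subseteq> S" and xv: "cox_le G S x v" and sK: "sg x \<subseteq> K"
  shows "pc (sg x) (pc K v) = x"
proof -
  have vc: "v \<in> carrier G" using xv unfolding cox_le_def by blast
  have "pc (sg x) (pc K v) = pc (K \<inter> sg x) v" using pc_pc[OF K supp_S vc] .
  also have "K \<inter> sg x = sg x" using sK by blast
  finally show ?thesis using xv unfolding cox_le_def by simp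
qed

lemma pc_le_v: assumes K: "K \<subseteq> S" and vc: "v \<in> carrier G" shows "cox_le G S (pc K v) v"
proof -
  define x where "x = pc K v"
  have xc: "x \<in> carrier G" using pc_carr[OF K vc] x_def by simp
  have xg: "x \<in> generate G K" using pc_props(1)[OF K vc] x_def by simp
  have sK: "sg x \<subseteq> K" using supp_le[OF K xg] .
  have "pc (sg x) x = x" using pc_self[OF xc] .
  then have "pc (sg x) (pc K v) = x" using x_def by simp
  then have "pc (K \<inter> sg x) v = x" using pc_pc[OF K supp_S vc] by simp
  moreover have "K \<inter> sg x = sg x" using sK by blast
  ultimately show ?thesis unfolding cox_le_def using xc vc x_def by simp
qed

end


context coxsys
begin

lemma fibre_char: assumes K: "K \<subseteq> S" and wv: "cox_le G S w v"
  shows "pc K v = w \<longleftrightarrow> sg w \<subseteq> K \<and> K \<inter> Des G S (mc (sg w) v) = {}"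
proof -
  have vc: "v \<in> carrier G" and wc: "w \<in> carrier G" and pw: "pc (sg w) v = w"
    using wv unfolding cox_le_def by auto
  have v1: "v = mc (sg w) v \<otimes> w" using pc_props(3)[OF supp_S[of w] vc] pw by simp
  have x: "mc (sg w) v \<in> min_reps G S (sg w)" using pc_props(2)[OF supp_S[of w] vc] .
  have xc: "mc (sg w) v \<in> carrier G" using minr_carr[OF x] .
  show ?thesis
  proof
    assume e: "pc K v = w"
    have "sg w \<subseteq> K" using supp_le[OF K] pc_props(1)[OF K vc] e by simp
    moreover have "v = mc K v \<otimes> w" using pc_props(3)[OF K vc] e by simp
    then have "mc K v = mc (sg w) v" using v1 minr_carr[OF pc_props(2)[OF K vc]] xc wc
      by (metis right_cancel)
    then have "K \<inter> Des G S (mc (sg w) v) = {}"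
      using pc_props(2)[OF K vc] minr_iff[OF K xc] by simp
    ultimately show "sg w \<subseteq> K \<and> K \<inter> Des G S (mc (sg w) v) = {}" by blast
  next
    assume a: "sg w \<subseteq> K \<and> K \<inter> Des G S (mc (sg w) v) = {}"
    then have xK: "mc (sg w) v \<in> min_reps G S K" using minr_iff[OF K xc] by simp
    have "w \<in> generate G K" using in_gen_supp[OF wc] gen_mono a by blast
    then have "pc K (mc (sg w) v \<otimes> w) = w" using pc_char[OF K xK] by blast
    then show "pc K v = w" using v1[symmetric] by simp
  qed
qed

lemma main:
  assumes uv: "cox_le G S u v"
  defines "I \<equiv> supp G S u" and "J \<equiv> supp G S v"
  defines "P \<equiv> {K. I \<subseteq> K \<and> K \<subseteq> J}"
    and "Itv \<equiv> cox_interval G S u v"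
    and "Gv \<equiv> (\<lambda>K. par_comp G S K v)"
    and "F \<equiv> supp G S"
  shows
    "(\<forall>K\<in>P. Gv K \<in> Itv) \<and> (\<forall>w\<in>Itv. F w \<in> P)
     \<and> (\<forall>w\<in>Itv. Gv (F w) = w) \<and> (\<forall>K\<in>P. F (Gv K) \<subseteq> K)
     \<and> inj_on F Itv
     \<and> (\<forall>w\<in>Itv. \<forall>g\<in>Itv. cox_le G S w g \<longrightarrow> F w \<subseteq> F g)
     \<and> (\<forall>w\<in>Itv. \<forall>g\<in>Itv. F (int_join G S u v w g) = F w \<union> F g)
     \<and> Gv ` P = Itv
     \<and> (\<forall>K\<in>P. \<forall>L\<in>P. K \<subseteq> L \<longrightarrow> cox_le G S (Gv K) (Gv L))
     \<and> (\<forall>K\<in>P. \<forall>L\<in>P. Gv (K \<inter> L) = int_meet G S u v (Gv K) (Gv L))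
     \<and> (\<forall>w\<in>Itv.
          (\<forall>K\<in>{K\<in>P. Gv K = w}. \<forall>L\<in>{K\<in>P. Gv K = w}.
              K \<union> L \<in> {K\<in>P. Gv K = w} \<and> K \<inter> L \<in> {K\<in>P. Gv K = w})
        \<and> F w \<in> {K\<in>P. Gv K = w} \<and> (\<forall>K\<in>{K\<in>P. Gv K = w}. F w \<subseteq> K)
        \<and> J - Des G S (min_comp G S (F w) v) \<in> {K\<in>P. Gv K = w}
        \<and> (\<forall>K\<in>{K\<in>P. Gv K = w}. K \<subseteq> J - Des G S (min_comp G S (F w) v)))"
proof -
  have uc: "u \<in> carrier G" and vc: "v \<in> carrier G" and pu: "pc I v = u"
    using uv unfolding cox_le_def I_def by auto
  have JS: "J \<subseteq> S" using supp_S J_def by simp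
  have IJ: "I \<subseteq> J" using le_supp[OF uv] I_def J_def by simp
  have PS: "K \<in> P \<Longrightarrow> K \<subseteq> S" for K using JS P_def by blast
  have Itv_iff: "w \<in> Itv \<longleftrightarrow> cox_le G S u w \<and> cox_le G S w v" for w
    unfolding Itv_def cox_interval_def by simp
  have Gv: "Gv K = pc K v" for K using Gv_def by simp
  have F: "F w = sg w" for w using F_def by simp
  have W1: "Gv K \<in> Itv" if K: "K \<in> P" for K
  proof -
    have KS: "K \<subseteq> S" using PS K .
    have IK: "I \<subseteq> K" using K P_def by simp
    have "cox_le G S u (pc K v)"
      unfolding cox_le_def using uc pc_carr[OF KS vc] pc_le[OF KS uv] IK I_def by simp
    then show ?thesis using Itv_iff pc_le_v[OF KS vc] Gv by simp
  qed
  have W2: "F w \<in> P" if w: "w \<in> Itv" for w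
    using le_supp w Itv_iff I_def J_def P_def F by blast
  have A1: "Gv (F w) = w" if w: "w \<in> Itv" for w
    using w Itv_iff Gv F unfolding cox_le_def by simp
  have A2: "F (Gv K) \<subseteq> K" if K: "K \<in> P" for K
    using supp_le[OF PS[OF K] pc_props(1)[OF PS[OF K] vc]] Gv F by simp
  have B1: "inj_on F Itv" using A1 by (metis inj_onI)
  have B2: "\<forall>w\<in>Itv. \<forall>g\<in>Itv. cox_le G S w g \<longrightarrow> F w \<subseteq> F g" using le_supp F by simp
  have Mo: "cox_le G S (Gv K) (Gv L)" if K: "K \<in> P" and L: "L \<in> P" and KL: "K \<subseteq> L" for K L
  proof -
    have x: "cox_le G S (Gv K) v" using W1[OF K] Itv_iff by blast
    have "sg (Gv K) \<subseteq> L" using A2[OF K] KL F by auto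
    then have "pc (sg (Gv K)) (pc L v) = Gv K" using pc_le[OF PS[OF L] x] by simp
    then show ?thesis unfolding cox_le_def using W1 K L Itv_iff Gv unfolding cox_le_def by auto
  qed
  have B3: "F (int_join G S u v w g) = F w \<union> F g" if w: "w \<in> Itv" and g: "g \<in> Itv" for w g
  proof -
    define z where "z = Gv (F w \<union> F g)"
    have UP: "F w \<union> F g \<in> P" using W2[OF w] W2[OF g] P_def by auto
    have zI: "z \<in> Itv" using W1[OF UP] z_def by simp
    have wz1: "cox_le G S w z"
    proof -
      have "pc (sg w) (pc (F w \<union> F g) v) = w" using pc_le[OF PS[OF UP]] w Itv_iff F by auto
      then show ?thesis unfolding cox_le_def using w zI Itv_iff z_def Gv unfolding cox_le_def by auto
    qed
    have gz1: "cox_le G S g z"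
    proof -
      have "pc (sg g) (pc (F w \<union> F g) v) = g" using pc_le[OF PS[OF UP]] g Itv_iff F by auto
      then show ?thesis unfolding cox_le_def using g zI Itv_iff z_def Gv unfolding cox_le_def by auto
    qed
    have least: "cox_le G S z z'" if z': "z' \<in> Itv" "cox_le G S w z'" "cox_le G S g z'" for z'
    proof -
      have zv: "cox_le G S z v" using zI Itv_iff by blast
      have z'v: "cox_le G S z' v" using z' Itv_iff by blast
      have "sg z \<subseteq> F w \<union> F g" using A2[OF UP] z_def F by simp
      also have "\<dots> \<subseteq> sg z'" using le_supp z' F by auto
      finally have "pc (sg z) (pc (sg z') v) = z" using pc_le[OF supp_S zv] by simp
      then show ?thesis using z'v zv unfolding cox_le_def by auto
    qed
    have "int_join G S u v w g = z" unfolding int_join_def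
    proof (rule the_equality)
      show "z \<in> cox_interval G S u v \<and> cox_le G S w z \<and> cox_le G S g z \<and>
        (\<forall>z'\<in>cox_interval G S u v. cox_le G S w z' \<and> cox_le G S g z' \<longrightarrow> cox_le G S z z')"
        using zI wz1 gz1 least Itv_def by auto
      fix z2 assume a: "z2 \<in> cox_interval G S u v \<and> cox_le G S w z2 \<and> cox_le G S g z2 \<and>
        (\<forall>z'\<in>cox_interval G S u v. cox_le G S w z' \<and> cox_le G S g z' \<longrightarrow> cox_le G S z2 z')"
      then have "cox_le G S z2 z" using zI wz1 gz1 Itv_def by blast
      moreover have "cox_le G S z z2" using least a Itv_def by blast
      ultimately show "z2 = z" using le_antisym by blast
    qed
    moreover have "F z = F w \<union> F g"
    proof
      show "F z \<subseteq> F w \<union> F g" using A2[OF UP] z_def by simp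
      show "F w \<union> F g \<subseteq> F z" using le_supp wz1 gz1 F by auto
    qed
    ultimately show ?thesis by simp
  qed
  have C1: "Gv ` P = Itv"
  proof
    show "Gv ` P \<subseteq> Itv" using W1 by blast
    show "Itv \<subseteq> Gv ` P" using W2 A1 by (metis image_eqI subsetI)
  qed
  have C3: "Gv (K \<inter> L) = int_meet G S u v (Gv K) (Gv L)" if K: "K \<in> P" and L: "L \<in> P" for K L
  proof -
    define z where "z = Gv (K \<inter> L)"
    have KLP: "K \<inter> L \<in> P" using K L P_def by auto
    have zI: "z \<in> Itv" using W1[OF KLP] z_def by simp
    have zK: "cox_le G S z (Gv K)" using Mo[OF KLP K] z_def by simp
    have zL: "cox_le G S z (Gv L)" using Mo[OF KLP L] z_def by simp
    have great: "cox_le G S z' z" if z': "z' \<in> Itv" "cox_le G S z' (Gv K)" "cox_le G S z' (Gv L)" for z'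
    proof -
      have z'v: "cox_le G S z' v" using z' Itv_iff by blast
      have "sg z' \<subseteq> K" using le_supp[OF z'(2)] A2[OF K] F by blast
      moreover have "sg z' \<subseteq> L" using le_supp[OF z'(3)] A2[OF L] F by blast
      ultimately have "pc (sg z') (pc (K \<inter> L) v) = z'" using pc_le[OF PS[OF KLP] z'v] by simp
      then show ?thesis using z'v zI Itv_iff z_def Gv unfolding cox_le_def by auto
    qed
    have "int_meet G S u v (Gv K) (Gv L) = z" unfolding int_meet_def
    proof (rule the_equality)
      show "z \<in> cox_interval G S u v \<and> cox_le G S z (Gv K) \<and> cox_le G S z (Gv L) \<and>
        (\<forall>z'\<in>cox_interval G S u v. cox_le G S z' (Gv K) \<and> cox_le G S z' (Gv L) \<longrightarrow> cox_le G S z' z)"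
        using zI zK zL great Itv_def by auto
      fix z2 assume a: "z2 \<in> cox_interval G S u v \<and> cox_le G S z2 (Gv K) \<and> cox_le G S z2 (Gv L) \<and>
        (\<forall>z'\<in>cox_interval G S u v. cox_le G S z' (Gv K) \<and> cox_le G S z' (Gv L) \<longrightarrow> cox_le G S z' z2)"
      then have "cox_le G S z z2" using zI zK zL Itv_def by blast
      moreover have "cox_le G S z2 z" using great a Itv_def by blast
      ultimately show "z2 = z" using le_antisym by blast
    qed
    then show ?thesis using z_def by simp
  qed
  have D: "(\<forall>K\<in>{K\<in>P. Gv K = w}. \<forall>L\<in>{K\<in>P. Gv K = w}.
              K \<union> L \<in> {K\<in>P. Gv K = w} \<and> K \<inter> L \<in> {K\<in>P. Gv K = w})
        \<and> F w \<in> {K\<in>P. Gv K = w} \<and> (\<forall>K\<in>{K\<in>P. Gv K = w}. F w \<subseteq> K)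
        \<and> J - Des G S (min_comp G S (F w) v) \<in> {K\<in>P. Gv K = w}
        \<and> (\<forall>K\<in>{K\<in>P. Gv K = w}. K \<subseteq> J - Des G S (min_comp G S (F w) v))"
    if w: "w \<in> Itv" for w
  proof -
    define Dw where "Dw = Des G S (mc (sg w) v)"
    have wv: "cox_le G S w v" using w Itv_iff by blast
    have fib: "(K \<in> {K\<in>P. Gv K = w}) \<longleftrightarrow> I \<subseteq> K \<and> K \<subseteq> J \<and> sg w \<subseteq> K \<and> K \<inter> Dw = {}" for K
    proof -
      have e: "(K \<in> {K\<in>P. Gv K = w}) \<longleftrightarrow> (I \<subseteq> K \<and> K \<subseteq> J) \<and> pc K v = w"
        unfolding P_def Gv_def by simp
      show ?thesis
      proof (cases "K \<subseteq> J")
        case True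
        then have KS: "K \<subseteq> S" using JS by (rule subset_trans)
        show ?thesis using e fibre_char[OF KS wv] True unfolding Dw_def by simp
      next
        case False then show ?thesis using e by simp
      qed
    qed
    have Iw: "I \<subseteq> sg w" and wJ: "sg w \<subseteq> J" using W2[OF w] unfolding P_def F_def by auto
    have pw: "pc (sg w) v = w" using wv unfolding cox_le_def by simp
    have wD: "sg w \<inter> Dw = {}" using fibre_char[OF supp_S[of w] wv] pw unfolding Dw_def by simp
    have Fw: "F w = sg w" unfolding F_def by simp
    have g1: "\<forall>K\<in>{K\<in>P. Gv K = w}. \<forall>L\<in>{K\<in>P. Gv K = w}.
              K \<union> L \<in> {K\<in>P. Gv K = w} \<and> K \<inter> L \<in> {K\<in>P. Gv K = w}"
    proof (intro ballI conjI)
      fix K L assume K: "K \<in> {K\<in>P. Gv K = w}" and L: "L \<in> {K\<in>P. Gv K = w}"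
      have K': "I \<subseteq> K \<and> K \<subseteq> J \<and> sg w \<subseteq> K \<and> K \<inter> Dw = {}" using K fib by blast
      have L': "I \<subseteq> L \<and> L \<subseteq> J \<and> sg w \<subseteq> L \<and> L \<inter> Dw = {}" using L fib by blast
      have "I \<subseteq> K \<union> L \<and> K \<union> L \<subseteq> J \<and> sg w \<subseteq> K \<union> L \<and> (K \<union> L) \<inter> Dw = {}" using K' L' by blast
      then show "K \<union> L \<in> {K\<in>P. Gv K = w}" using fib by blast
      have "I \<subseteq> K \<inter> L \<and> K \<inter> L \<subseteq> J \<and> sg w \<subseteq> K \<inter> L \<and> (K \<inter> L) \<inter> Dw = {}" using K' L' by blast
      then show "K \<inter> L \<in> {K\<in>P. Gv K = w}" using fib by blast
    qed
    have g2: "F w \<in> {K\<in>P. Gv K = w}" using fib[of "sg w"] Iw wJ wD Fw by simp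
    have g3: "\<forall>K\<in>{K\<in>P. Gv K = w}. F w \<subseteq> K" using fib Fw by blast
    have g4: "J - Dw \<in> {K\<in>P. Gv K = w}"
    proof -
      have "I \<subseteq> J - Dw \<and> J - Dw \<subseteq> J \<and> sg w \<subseteq> J - Dw \<and> (J - Dw) \<inter> Dw = {}"
        using Iw wJ wD by blast
      then show ?thesis using fib by blast
    qed
    have g5: "\<forall>K\<in>{K\<in>P. Gv K = w}. K \<subseteq> J - Dw" using fib by blast
    have DD: "Des G S (min_comp G S (F w) v) = Dw" using Dw_def Fw by simp
    show ?thesis unfolding DD using g1 g2 g3 g4 g5 by (intro conjI) assumption+
  qed
  have f1: "\<forall>K\<in>P. Gv K \<in> Itv" using W1 by blast
  have f2: "\<forall>w\<in>Itv. F w \<in> P" using W2 by blast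
  have f3: "\<forall>w\<in>Itv. Gv (F w) = w" using A1 by blast
  have f4: "\<forall>K\<in>P. F (Gv K) \<subseteq> K" using A2 by blast
  have f5: "\<forall>w\<in>Itv. \<forall>g\<in>Itv. F (int_join G S u v w g) = F w \<union> F g" using B3 by blast
  have f6: "\<forall>K\<in>P. \<forall>L\<in>P. K \<subseteq> L \<longrightarrow> cox_le G S (Gv K) (Gv L)" using Mo by blast
  have f7: "\<forall>K\<in>P. \<forall>L\<in>P. Gv (K \<inter> L) = int_meet G S u v (Gv K) (Gv L)" using C3 by blast
  have f8: "\<forall>w\<in>Itv.
          (\<forall>K\<in>{K\<in>P. Gv K = w}. \<forall>L\<in>{K\<in>P. Gv K = w}.
              K \<union> L \<in> {K\<in>P. Gv K = w} \<and> K \<inter> L \<in> {K\<in>P. Gv K = w})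
        \<and> F w \<in> {K\<in>P. Gv K = w} \<and> (\<forall>K\<in>{K\<in>P. Gv K = w}. F w \<subseteq> K)
        \<and> J - Des G S (min_comp G S (F w) v) \<in> {K\<in>P. Gv K = w}
        \<and> (\<forall>K\<in>{K\<in>P. Gv K = w}. K \<subseteq> J - Des G S (min_comp G S (F w) v))"
    using D by blast
  show ?thesis using f1 f2 f3 f4 B1 B2 f5 C1 f6 f7 f8 by (intro conjI) assumption+
qed

end

theorem mainTheorem12:
  fixes G :: "('a, 'b) monoid_scheme" and S :: "'a set" and u v :: 'a
  assumes cox: "coxeter_system G S"
    and uv: "cox_le G S u v"
  defines "I \<equiv> supp G S u" and "J \<equiv> supp G S v"
  defines "P \<equiv> {K. I \<subseteq> K \<and> K \<subseteq> J}"
    and "Itv \<equiv> cox_interval G S u v"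
    and "Gv \<equiv> (\<lambda>K. par_comp G S K v)"
    and "F \<equiv> supp G S"
  shows
    \<comment> \<open>well-definedness\<close>
    "(\<forall>K\<in>P. Gv K \<in> Itv) \<and> (\<forall>w\<in>Itv. F w \<in> P)
     \<comment> \<open>(a)\<close>
     \<and> (\<forall>w\<in>Itv. Gv (F w) = w) \<and> (\<forall>K\<in>P. F (Gv K) \<subseteq> K)
     \<comment> \<open>(b)\<close>
     \<and> inj_on F Itv
     \<and> (\<forall>w\<in>Itv. \<forall>g\<in>Itv. cox_le G S w g \<longrightarrow> F w \<subseteq> F g)
     \<and> (\<forall>w\<in>Itv. \<forall>g\<in>Itv. F (int_join G S u v w g) = F w \<union> F g)
     \<comment> \<open>(c)\<close>
     \<and> Gv ` P = Itv
     \<and> (\<forall>K\<in>P. \<forall>L\<in>P. K \<subseteq> L \<longrightarrow> cox_le G S (Gv K) (Gv L))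
     \<and> (\<forall>K\<in>P. \<forall>L\<in>P. Gv (K \<inter> L) = int_meet G S u v (Gv K) (Gv L))
     \<comment> \<open>(d)\<close>
     \<and> (\<forall>w\<in>Itv.
          (\<forall>K\<in>{K\<in>P. Gv K = w}. \<forall>L\<in>{K\<in>P. Gv K = w}.
              K \<union> L \<in> {K\<in>P. Gv K = w} \<and> K \<inter> L \<in> {K\<in>P. Gv K = w})
        \<and> F w \<in> {K\<in>P. Gv K = w} \<and> (\<forall>K\<in>{K\<in>P. Gv K = w}. F w \<subseteq> K)
        \<and> J - Des G S (min_comp G S (F w) v) \<in> {K\<in>P. Gv K = w}
        \<and> (\<forall>K\<in>{K\<in>P. Gv K = w}. K \<subseteq> J - Des G S (min_comp G S (F w) v)))"
  using coxsys.main[OF coxsys.intro[OF cox] uv]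
  unfolding I_def J_def P_def Itv_def Gv_def F_def .


end
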